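(* Let $H$ be the real space of Hermitian matrices on a finite-dimensional system $\tilde V$ with $\langle A,B\rangle=\mathrm{Tr}(AB)$. Let $\mathcal{K}\subset H$ be a proper convex cone (closed, convex, pointed, with nonempty interior) and $\mathcal{F}\subset H$ a compact set such that $\{\lambda Z:0\le\lambda\le1,\ Z\in\mathcal{F}\}$ is convex and $\mathcal{F}\cap\mathrm{int}(\mathcal{K})\neq\emptyset$. Define $R^{\mathcal{F}}_{\mathcal{K}}(\mathcal{E}):=\inf\{\lambda\in\mathbb{R}_+:\ (\mathcal{E}+\lambda\mathcal{E}')/(1+\lambda)\in\mathcal{F},\ \mathcal{E}'\in\mathcal{K}\}$ and $\mathcal{N}:=\{\mathcal{E}\in H:\ \delta Z-\mathcal{E}\notin\mathcal{K}\ \ \forall\delta<1,\ Z\in\mathcal{F}\}$, and let $\mathcal{E}\in\mathcal{N}$. Let $\tilde V'$ be any finite-dimensional system and $\mathcal{L}$ a set of pairs $(\{\hat{\mathcal{J}}_m\}_{m=1}^M,\{\Phi_m\}_{m=1}^M)$, where each $\hat{\mathcal{J}}_m:\mathsf{Her}_{\tilde V}\to\mathsf{Her}_{\tilde V'}$ is linear and $\Phi_1,\dots,\Phi_M\in\mathsf{Her}_{\tilde V'}$. Assume that the cone generated by $\mathcal{X}:=\{\sum_{m=1}^M\hat{\mathcal{J}}_m^\dagger(\Phi_m):(\{\hat{\mathcal{J}}_m\},\{\Phi_m\})\in\mathcal{L}\}$ equals $\mathcal{K}^*$, i.e. $\{\lambda\varphi:\lambda\in\mathbb{R}_+,\varphi\in\mathcal{X}\}=\mathcal{K}^*$.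 Let $\mathcal{L}':=\{(\{\hat{\mathcal{J}}_m\},\{\Phi_m\})\in\mathcal{L}:\sum_m\hat{\mathcal{J}}_m^\dagger(\Phi_m)\neq0\}$. Then $$\max_{(\{\hat{\mathcal{J}}_m\},\{\Phi_m\})\in\mathcal{L}'}\frac{\sum_{m=1}^M\langle\Phi_m,\hat{\mathcal{J}}_m(\mathcal{E})\rangle}{\max_{Z\in\mathcal{F}}\sum_{m=1}^M\langle\Phi_m,\hat{\mathcal{J}}_m(Z)\rangle}=1+R^{\mathcal{F}}_{\mathcal{K}}(\mathcal{E}).$$
   Context: $\mathsf{Her}_X$: Hermitian matrices on $X$ (so $H=\mathsf{Her}_{\tilde V}$). $\hat{\mathcal{J}}_m^\dagger$ is the adjoint defined by $\langle\hat{\mathcal{J}}_m^\dagger(\Phi'),\mathcal{E}'\rangle=\langle\Phi',\hat{\mathcal{J}}_m(\mathcal{E}')\rangle$ for all $\mathcal{E}'\in\mathsf{Her}_{\tilde V}$, $\Phi'\in\mathsf{Her}_{\tilde V'}$. $\mathcal{K}^*:=\{\varphi\in H:\langle\varphi,x\rangle\ge0\ \forall x\in\mathcal{K}\}$; $\mathrm{int}$ denotes interior. *)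

theory Defs
  imports "HOL-Analysis.Analysis"
begin

definition Her :: "(complex^'n^'n) set" where
  "Her = {A. \<forall>i j. A $ i $ j = cnj (A $ j $ i)}"

definition hs_inner :: "complex^'n^'n \<Rightarrow> complex^'n^'n \<Rightarrow> real" where
  "hs_inner A B = Re (trace (A ** B))"

definition her_linear :: "(complex^'n^'n \<Rightarrow> complex^'m^'m) \<Rightarrow> bool" where
  "her_linear J \<longleftrightarrow> (\<forall>X\<in>Her. J X \<in> Her) \<and>
     (\<forall>X\<in>Her. \<forall>Y\<in>Her. \<forall>a b::real. J (a *\<^sub>R X + b *\<^sub>R Y) = a *\<^sub>R J X + b *\<^sub>R J Y)"

definition her_adj :: "(complex^'n^'n \<Rightarrow> complex^'m^'m) \<Rightarrow> complex^'m^'m \<Rightarrow> complex^'n^'n" where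
  "her_adj J Phi = (THE A. A \<in> Her \<and> (\<forall>E\<in>Her. hs_inner A E = hs_inner Phi (J E)))"

definition dual_cone :: "(complex^'n^'n) set \<Rightarrow> (complex^'n^'n) set" where
  "dual_cone K = {phi \<in> Her. \<forall>x\<in>K. hs_inner phi x \<ge> 0}"

definition proper_cone :: "(complex^'n^'n) set \<Rightarrow> bool" where
  "proper_cone K \<longleftrightarrow> K \<subseteq> Her \<and> K \<noteq> {} \<and> cone K \<and> convex K \<and> closed K \<and>
     K \<inter> uminus ` K = {0} \<and> (top_of_set Her) interior_of K \<noteq> {}"

definition robustness :: "(complex^'n^'n) set \<Rightarrow> (complex^'n^'n) set \<Rightarrow> complex^'n^'n \<Rightarrow> real" where
  "robustness F K E = Inf {lam. lam \<ge> 0 \<and>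
     (\<exists>E'\<in>K. (1 / (1 + lam)) *\<^sub>R (E + lam *\<^sub>R E') \<in> F)}"

definition free_set :: "(complex^'n^'n) set \<Rightarrow> (complex^'n^'n) set \<Rightarrow> (complex^'n^'n) set" where
  "free_set F K = {E \<in> Her. \<forall>delta::real. \<forall>Z\<in>F. delta < 1 \<longrightarrow> delta *\<^sub>R Z - E \<notin> K}"

end

theory Submission
  imports Defs
begin


lemma Her_iff: "A \<in> Her \<longleftrightarrow> (\<forall>i j. A $ i $ j = cnj (A $ j $ i))"
  by (simp add: Her_def)

lemma Her_add: assumes "A \<in> Her" "B \<in> Her" shows "A + B \<in> Her"
proof -
  have "(A + B) $ i $ j = cnj ((A + B) $ j $ i)" for i j
  proof -
    have "A $ i $ j = cnj (A $ j $ i)" "B $ i $ j = cnj (B $ j $ i)" using assms unfolding Her_def by blast+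
    thus ?thesis by simp
  qed
  thus ?thesis unfolding Her_def by blast
qed
lemma Her_uminus: assumes "A \<in> Her" shows "- A \<in> Her"
proof -
  have "(- A) $ i $ j = cnj ((- A) $ j $ i)" for i j
  proof -
    have "A $ i $ j = cnj (A $ j $ i)" using assms unfolding Her_def by blast+
    thus ?thesis by simp
  qed
  thus ?thesis unfolding Her_def by blast
qed
lemma Her_diff: "A \<in> Her \<Longrightarrow> B \<in> Her \<Longrightarrow> A - B \<in> Her"
  using Her_add[of A "- B"] Her_uminus[of B] by simp
lemma Her_zero: "0 \<in> Her"
  by (simp add: Her_def)
lemma Her_scaleR: assumes "A \<in> Her" shows "c *\<^sub>R A \<in> Her"
proof -
  have "(c *\<^sub>R A) $ i $ j = cnj ((c *\<^sub>R A) $ j $ i)" for i j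
  proof -
    have "A $ i $ j = cnj (A $ j $ i)" using assms unfolding Her_def by blast+
    thus ?thesis by simp
  qed
  thus ?thesis unfolding Her_def by blast
qed
lemma Her_sum: "(\<And>i. i \<in> S \<Longrightarrow> f i \<in> Her) \<Longrightarrow> sum f S \<in> Her"
  by (induction S rule: infinite_finite_induct) (auto simp: Her_zero Her_add)

definition HP :: "complex^'n^'n \<Rightarrow> complex^'n^'n" where
  "HP X = (\<chi> i j. (X$i$j + cnj (X$j$i)) / 2)"

lemma HP_Her: "HP X \<in> Her"
  by (simp add: Her_def HP_def add.commute)

lemma HP_id: "X \<in> Her \<Longrightarrow> HP X = X"
proof -
  assume X: "X \<in> Her"
  have "(X$i$j + cnj (X$j$i)) / 2 = X$i$j" for i j
  proof -
    have "X $ j $ i = cnj (X $ i $ j)" using X unfolding Her_def by blast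
    thus ?thesis by simp
  qed
  thus ?thesis by (simp add: HP_def vec_eq_iff)
qed

lemma linear_HP: "linear HP"
proof (rule linearI)
  fix x y :: "complex^'n^'n"
  show "HP (x + y) = HP x + HP y"
    by (simp add: HP_def vec_eq_iff add_divide_distrib algebra_simps)
next
  fix c :: real and x :: "complex^'n^'n"
  have "(c *\<^sub>R x $ i $ j + cnj (c *\<^sub>R x $ j $ i)) / 2 = c *\<^sub>R ((x $ i $ j + cnj (x $ j $ i)) / 2)" for i j
    by (simp add: scaleR_conv_of_real algebra_simps add_divide_distrib)
  thus "HP (c *\<^sub>R x) = c *\<^sub>R HP x"
    by (simp add: HP_def vec_eq_iff)
qed

lemma inner_cnj: "inner (cnj a) b = inner a (cnj b)"
  by (simp add: inner_complex_def)

lemma inner_half_left: "inner ((z::complex) / 2) w = inner z w / 2"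
  by (simp add: inner_complex_def add_divide_distrib)
lemma inner_half_right: "inner w ((z::complex) / 2) = inner w z / 2"
  by (simp add: inner_complex_def add_divide_distrib)

lemma HP_selfadj: "inner (HP X) Y = inner X (HP Y)"
proof -
  have "inner (HP X) Y = (\<Sum>i\<in>UNIV. \<Sum>j\<in>UNIV. (inner (X$i$j) (Y$i$j) + inner (cnj (X$j$i)) (Y$i$j)) / 2)"
    by (simp add: inner_vec_def HP_def inner_add_left inner_half_left add_divide_distrib sum_divide_distrib)
  also have "\<dots> = (\<Sum>i\<in>UNIV. \<Sum>j\<in>UNIV. inner (X$i$j) (Y$i$j)) / 2 + (\<Sum>i\<in>UNIV. \<Sum>j\<in>UNIV. inner (X$j$i) (cnj (Y$i$j))) / 2"
    by (simp add: inner_cnj add_divide_distrib sum.distrib sum_divide_distrib)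
  also have "(\<Sum>i\<in>UNIV. \<Sum>j\<in>UNIV. inner (X$j$i) (cnj (Y$i$j))) = (\<Sum>i\<in>UNIV. \<Sum>j\<in>UNIV. inner (X$i$j) (cnj (Y$j$i)))"
    by (rule sum.swap)
  also have "(\<Sum>i\<in>UNIV. \<Sum>j\<in>UNIV. inner (X$i$j) (Y$i$j)) / 2 + \<dots> / 2 = inner X (HP Y)"
    by (simp add: inner_vec_def HP_def inner_add_right inner_half_right add_divide_distrib sum.distrib sum_divide_distrib)
  finally show ?thesis .
qed

lemma hs_inner_eq: "B \<in> Her \<Longrightarrow> hs_inner A B = inner A B"
proof -
  assume B: "B \<in> Her"
  have "hs_inner A B = (\<Sum>i\<in>UNIV. \<Sum>k\<in>UNIV. Re (A$i$k * B$k$i))"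
    by (simp add: hs_inner_def trace_def matrix_matrix_mult_def Re_sum)
  also have "\<dots> = (\<Sum>i\<in>UNIV. \<Sum>k\<in>UNIV. inner (A$i$k) (B$i$k))"
  proof (intro sum.cong refl)
    fix i k
    have "B $ k $ i = cnj (B $ i $ k)" using B unfolding Her_def by blast
    thus "Re (A$i$k * B$k$i) = inner (A$i$k) (B$i$k)" by (simp add: inner_complex_def)
  qed
  also have "\<dots> = inner A B" by (simp add: inner_vec_def)
  finally show ?thesis .
qed


lemma her_linear_add: "her_linear J \<Longrightarrow> X \<in> Her \<Longrightarrow> Y \<in> Her \<Longrightarrow> J (X + Y) = J X + J Y"
  unfolding her_linear_def by (metis scaleR_one)
lemma her_linear_scale: "her_linear J \<Longrightarrow> X \<in> Her \<Longrightarrow> J (c *\<^sub>R X) = c *\<^sub>R J X"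
  unfolding her_linear_def by (metis add.right_neutral scaleR_zero_left)
lemma her_linear_Her: "her_linear J \<Longrightarrow> X \<in> Her \<Longrightarrow> J X \<in> Her"
  unfolding her_linear_def by blast

lemma her_adj_exists:
  fixes J :: "complex^'n^'n \<Rightarrow> complex^'m^'m"
  assumes J: "her_linear J" and Phi: "Phi \<in> Her"
  shows "\<exists>A. A \<in> Her \<and> (\<forall>E\<in>Her. hs_inner A E = hs_inner Phi (J E))"
proof -
  define g where "g X = inner Phi (J (HP X))" for X
  have lin: "linear g"
  proof (rule linearI)
    fix x y
    have "J (HP (x + y)) = J (HP x) + J (HP y)"
      by (simp only: linear_add[OF linear_HP] her_linear_add[OF J HP_Her HP_Her])
    thus "g (x + y) = g x + g y"
      unfolding g_def by (simp add: inner_add_right)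
  next
    fix c :: real and x
    have "J (HP (c *\<^sub>R x)) = c *\<^sub>R J (HP x)"
      by (simp only: linear_scale[OF linear_HP] her_linear_scale[OF J HP_Her])
    thus "g (c *\<^sub>R x) = c *\<^sub>R g x"
      unfolding g_def by simp
  qed
  define a where "a = (\<Sum>b\<in>Basis. g b *\<^sub>R b)"
  have ga: "inner a X = g X" for X
  proof -
    have "g X = g (\<Sum>b\<in>Basis. (X \<bullet> b) *\<^sub>R b)" by (simp add: euclidean_representation)
    also have "\<dots> = (\<Sum>b\<in>Basis. (X \<bullet> b) * g b)"
      by (simp add: linear_sum[OF lin] linear_scale[OF lin])
    also have "\<dots> = (\<Sum>b\<in>Basis. g b * (b \<bullet> X))"
      by (simp add: inner_commute mult.commute)
    also have "\<dots> = inner a X"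
      by (simp add: a_def inner_sum_left)
    finally show ?thesis by simp
  qed
  show ?thesis
  proof (intro exI conjI ballI)
    show "HP a \<in> Her" by (rule HP_Her)
    fix E :: "complex^'n^'n" assume E: "E \<in> Her"
    have "hs_inner (HP a) E = inner a (HP E)" using E by (simp add: hs_inner_eq HP_selfadj)
    also have "\<dots> = g E" using E by (simp add: HP_id ga)
    also have "\<dots> = hs_inner Phi (J E)" using E by (simp add: g_def HP_id hs_inner_eq her_linear_Her[OF J E])
    finally show "hs_inner (HP a) E = hs_inner Phi (J E)" .
  qed
qed

lemma her_adj:
  fixes J :: "complex^'n^'n \<Rightarrow> complex^'m^'m"
  assumes J: "her_linear J" and Phi: "Phi \<in> Her"
  shows "her_adj J Phi \<in> Her \<and> (\<forall>E\<in>Her. hs_inner (her_adj J Phi) E = hs_inner Phi (J E))"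
proof -
  have "\<exists>!A. A \<in> Her \<and> (\<forall>E\<in>Her. hs_inner A E = hs_inner Phi (J E))"
  proof (rule ex_ex1I)
    show "\<exists>A. A \<in> Her \<and> (\<forall>E\<in>Her. hs_inner A E = hs_inner Phi (J E))"
      by (rule her_adj_exists[OF J Phi])
  next
    fix A B assume A: "A \<in> Her \<and> (\<forall>E\<in>Her. hs_inner A E = hs_inner Phi (J E))"
      and B: "B \<in> Her \<and> (\<forall>E\<in>Her. hs_inner B E = hs_inner Phi (J E))"
    have D: "A - B \<in> Her" using A B Her_diff by blast
    have "inner (A - B) (A - B) = hs_inner A (A - B) - hs_inner B (A - B)"
      using D by (simp add: hs_inner_eq inner_diff_left)
    also have "\<dots> = 0" using A B D by simp
    finally show "A = B" by simp
  qed
  then show ?thesis unfolding her_adj_def by (rule theI')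
qed




locale setting =
  fixes K F :: "(complex^'n^'n) set" and E Z0 :: "complex^'n^'n" and r0 :: real
  assumes Kcone: "cone K" and Kconv: "convex K" and KHer: "K \<subseteq> Her"
    and FHer: "F \<subseteq> Her" and Fcomp: "compact F"
    and Sconv: "convex {lam *\<^sub>R Z | lam Z. 0 \<le> lam \<and> lam \<le> 1 \<and> Z \<in> F}"
    and Z0F: "Z0 \<in> F" and Z0K: "Z0 \<in> K" and r0: "r0 > 0"
    and Z0ball: "\<And>y. y \<in> Her \<Longrightarrow> norm y < r0 \<Longrightarrow> Z0 + y \<in> K"
    and EHer: "E \<in> Her"
    and Nfree: "\<And>d Z. Z \<in> F \<Longrightarrow> d < 1 \<Longrightarrow> d *\<^sub>R Z - E \<notin> K"
begin

definition "Aset = {lam. lam \<ge> 0 \<and> (\<exists>E'\<in>K. (1 / (1 + lam)) *\<^sub>R (E + lam *\<^sub>R E') \<in> F)}"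
definition "R = Inf Aset"

lemma R_eq: "robustness F K E = R"
  by (simp add: robustness_def R_def Aset_def)

lemma K_scale: "x \<in> K \<Longrightarrow> c \<ge> 0 \<Longrightarrow> c *\<^sub>R x \<in> K"
  using Kcone by (simp add: cone_def)

lemma K_zero: "0 \<in> K"
  using K_scale[OF Z0K, of 0] by simp

lemma K_add: "x \<in> K \<Longrightarrow> y \<in> K \<Longrightarrow> x + y \<in> K"
proof -
  assume x: "x \<in> K" and y: "y \<in> K"
  have "(1/2) *\<^sub>R x + (1/2) *\<^sub>R y \<in> K"
    using Kconv x y by (simp add: convex_def)
  from K_scale[OF this, of 2] show ?thesis by (simp add: scaleR_add_right)
qed

definition "robust c \<longleftrightarrow> c \<in> K \<and> (\<exists>r>0. \<forall>y\<in>Her. norm y < r \<longrightarrow> c + y \<in> K)"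

lemma robust_Z0: "robust Z0"
  unfolding robust_def using Z0K r0 Z0ball by blast

lemma robust_add: "robust c \<Longrightarrow> k \<in> K \<Longrightarrow> robust (c + k)"
  unfolding robust_def
  by (metis (no_types, lifting) K_add add.commute add.left_commute)

lemma robust_scale:
  assumes c: "robust c" and e: "e > 0" shows "robust (e *\<^sub>R c)"
proof -
  obtain r where r: "r > 0" "\<And>y. y \<in> Her \<Longrightarrow> norm y < r \<Longrightarrow> c + y \<in> K"
    using c unfolding robust_def by blast
  have "\<forall>y\<in>(Her :: (complex^'n^'n) set). norm y < e * r \<longrightarrow> e *\<^sub>R c + y \<in> K"
  proof (intro ballI impI)
    fix y :: "complex^'n^'n" assume y: "y \<in> Her" "norm y < e * r"
    have "(1/e) *\<^sub>R y \<in> Her" using y Her_scaleR by blast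
    moreover have "norm ((1/e) *\<^sub>R y) < r" using y e by (simp add: field_simps)
    ultimately have "c + (1/e) *\<^sub>R y \<in> K" using r by blast
    from K_scale[OF this, of e] e show "e *\<^sub>R c + y \<in> K"
      by (simp add: scaleR_add_right)
  qed
  moreover have "e *\<^sub>R c \<in> K" using c e K_scale unfolding robust_def by simp
  ultimately show ?thesis unfolding robust_def using e r by (meson mult_pos_pos)
qed

lemma feas_mu:
  assumes mu: "mu > 1" and Z: "Z \<in> F" and k: "k \<in> K" and Eq: "E = mu *\<^sub>R Z - k"
  shows "mu - 1 \<in> Aset"
proof -
  have eq: "(1 / (1 + (mu - 1))) *\<^sub>R (E + (mu - 1) *\<^sub>R ((1 / (mu - 1)) *\<^sub>R k)) = Z"
    using mu by (simp add: Eq)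
  have P: "(1 / (1 + (mu - 1))) *\<^sub>R (E + (mu - 1) *\<^sub>R ((1 / (mu - 1)) *\<^sub>R k)) \<in> F"
    by (subst eq) (rule Z)
  have kK: "(1 / (mu - 1)) *\<^sub>R k \<in> K" using K_scale k mu by simp
  show ?thesis unfolding Aset_def
    apply (rule CollectI, rule conjI)
    using mu apply simp
    using P kK by blast
qed

lemma KL:
  assumes Z: "Z \<in> F" and c: "robust c" and Eq: "E = mu *\<^sub>R Z - c"
  shows "\<exists>l\<in>Aset. l < mu - 1"
proof -
  obtain r where r: "r > 0" "\<And>y. y \<in> Her \<Longrightarrow> norm y < r \<Longrightarrow> c + y \<in> K"
    using c unfolding robust_def by blast
  define eta where "eta = (if mu > 1 then min (r / (2 * (norm Z + 1))) ((mu - 1) / 2) else r / (2 * (norm Z + 1)))"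
  have nz: "2 * (norm Z + 1) > 0" by (smt (verit) norm_ge_zero)
  have eta0: "eta > 0" using r nz by (simp add: eta_def)
  have "eta \<le> r / (2 * (norm Z + 1))" by (simp add: eta_def)
  hence "eta * norm Z \<le> r / (2 * (norm Z + 1)) * norm Z"
    by (rule mult_right_mono) simp
  also have "\<dots> = r * (norm Z / (2 * (norm Z + 1)))" by simp
  also have "\<dots> < r * 1" using r nz by (intro mult_strict_left_mono) (simp_all add: field_simps)
  also have "\<dots> = r" by simp
  finally have en: "norm (- (eta *\<^sub>R Z)) < r" using eta0 by simp
  have ZH: "- (eta *\<^sub>R Z) \<in> Her" using Z FHer Her_scaleR Her_uminus by blast
  have ck: "c - eta *\<^sub>R Z \<in> K" using r(2)[OF ZH en] by simp
  have E2: "E = (mu - eta) *\<^sub>R Z - (c - eta *\<^sub>R Z)" using Eq by (simp add: algebra_simps)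
  show ?thesis
  proof (cases "mu > 1")
    case True
    have "eta \<le> (mu - 1) / 2" unfolding eta_def if_P[OF True] by (rule min.cobounded2)
    hence "mu - eta > 1" using True by (simp add: field_simps)
    from feas_mu[OF this Z ck E2] show ?thesis using eta0 by force
  next
    case False
    hence "mu - eta < 1" using eta0 by simp
    from Nfree[OF Z this] have "(mu - eta) *\<^sub>R Z - E \<notin> K" .
    moreover have "(mu - eta) *\<^sub>R Z - E = c - eta *\<^sub>R Z" using E2 by simp
    ultimately show ?thesis using ck by simp
  qed
qed

lemma A_ne: "Aset \<noteq> {}"
proof -
  define mu where "mu = 4 * (norm E + 1) / r0"
  have nz: "4 * (norm E + 1) > 0" by (smt (verit) norm_ge_zero)
  have mu0: "mu > 0" using r0 nz unfolding mu_def by (rule divide_pos_pos[rotated])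
  have "robust (mu *\<^sub>R Z0 - E)"
    unfolding robust_def
  proof (intro conjI exI[of _ "mu * r0 / 2"] ballI impI)
    show mr: "mu * r0 / 2 > 0" using mu0 r0 by simp
    have key: "mu *\<^sub>R Z0 - E + y \<in> K" if y: "y \<in> Her" "norm y < mu * r0 / 2" for y
    proof -
      have H: "(1/mu) *\<^sub>R (y - E) \<in> Her" using y EHer Her_diff Her_scaleR by blast
      have "norm ((1/mu) *\<^sub>R (y - E)) \<le> (norm y + norm E) / mu"
        using mu0 norm_triangle_ineq4[of y E] by (simp add: divide_right_mono)
      also have "\<dots> < r0"
      proof -
        have "mu * r0 / 2 = 2 * (norm E + 1)" using r0 by (simp add: mu_def)
        hence "norm E < mu * r0 / 2" by (smt (verit) norm_ge_zero)
        hence "norm y + norm E < mu * r0" using y by simp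
        thus ?thesis using mu0 by (simp add: field_simps)
      qed
      finally have "Z0 + (1/mu) *\<^sub>R (y - E) \<in> K" using Z0ball H by blast
      from K_scale[OF this, of mu] mu0 show ?thesis by (simp add: scaleR_add_right algebra_simps)
    qed
    show "mu *\<^sub>R Z0 - E \<in> K" using key[OF Her_zero] mr by simp
    fix y :: "complex^'n^'n" assume "y \<in> Her" "norm y < mu * r0 / 2" thus "mu *\<^sub>R Z0 - E + y \<in> K" by (rule key)
  qed
  from KL[OF Z0F this] show ?thesis by auto
qed

lemma A_bdd: "bdd_below Aset"
  unfolding Aset_def bdd_below_def by auto

lemma R_le: "l \<in> Aset \<Longrightarrow> R \<le> l"
  unfolding R_def using A_bdd by (simp add: cInf_lower)

lemma R_nonneg: "R \<ge> 0"
  unfolding R_def using A_ne by (rule cInf_greatest) (simp add: Aset_def)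

end



context setting begin

lemma bdd_inner: "bdd_above ((\<lambda>Z. inner p Z) ` F)"
proof -
  have "compact ((\<lambda>Z. inner p Z) ` F)"
    by (rule compact_continuous_image[OF _ Fcomp]) (intro continuous_intros)
  thus ?thesis by (intro bounded_imp_bdd_above compact_imp_bounded)
qed

lemma F_ne: "F \<noteq> {}" using Z0F by blast

lemma dual_pos:
  assumes pH: "p \<in> Her" and pK: "\<forall>x\<in>K. 0 \<le> inner p x" and p0: "p \<noteq> 0"
  shows "inner p Z0 > 0"
proof -
  define tau where "tau = r0 / (2 * (norm p + 1))"
  have nz: "2 * (norm p + 1) > 0" by (smt (verit) norm_ge_zero)
  have tau0: "tau > 0" unfolding tau_def using r0 nz by (rule divide_pos_pos)
  have "tau * norm p < r0"
  proof -
    have "tau * norm p = r0 * (norm p / (2 * (norm p + 1)))" by (simp add: tau_def)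
    also have "\<dots> < r0 * 1" using r0 nz by (intro mult_strict_left_mono) (simp_all add: divide_less_eq_1_pos)
    finally show ?thesis by simp
  qed
  hence "norm (- (tau *\<^sub>R p)) < r0" using tau0 by simp
  moreover have "- (tau *\<^sub>R p) \<in> Her" using pH Her_scaleR Her_uminus by blast
  ultimately have "Z0 - tau *\<^sub>R p \<in> K" using Z0ball by fastforce
  hence "0 \<le> inner p (Z0 - tau *\<^sub>R p)" using pK by blast
  hence "0 \<le> inner p Z0 - tau * inner p p" by (simp add: inner_diff_right)
  moreover have "inner p p > 0" using p0 by simp
  ultimately show ?thesis using tau0 by (smt (verit) mult_pos_pos)
qed

lemma upper:
  assumes pH: "p \<in> Her" and pK: "\<forall>x\<in>K. 0 \<le> inner p x" and p0: "p \<noteq> 0"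
  shows "(SUP Z\<in>F. inner p Z) > 0" and "inner p E / (SUP Z\<in>F. inner p Z) \<le> 1 + R"
proof -
  let ?h = "(SUP Z\<in>F. inner p Z)"
  have "inner p Z0 \<le> ?h" using cSUP_upper[OF Z0F bdd_inner] .
  thus h0: "?h > 0" using dual_pos[OF assms] by simp
  have "inner p E / ?h - 1 \<le> l" if l: "l \<in> Aset" for l
  proof -
    obtain E' where E': "E' \<in> K" "(1 / (1 + l)) *\<^sub>R (E + l *\<^sub>R E') \<in> F" and l0: "l \<ge> 0"
      using l unfolding Aset_def by blast
    define Z where "Z = (1 / (1 + l)) *\<^sub>R (E + l *\<^sub>R E')"
    have EZ: "E = (1 + l) *\<^sub>R Z - l *\<^sub>R E'" using l0 by (simp add: Z_def)
    have "inner p E = (1 + l) * inner p Z - l * inner p E'" by (simp add: EZ inner_diff_right)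
    also have "\<dots> \<le> (1 + l) * inner p Z" using pK E' l0 by simp
    also have "\<dots> \<le> (1 + l) * ?h" using cSUP_upper[OF E'(2)[folded Z_def] bdd_inner, of p] l0
      by (intro mult_left_mono) simp_all
    finally have "inner p E \<le> (1 + l) * ?h" .
    thus ?thesis using h0 by (simp add: field_simps)
  qed
  hence "inner p E / ?h - 1 \<le> R" unfolding R_def using A_ne by (intro cInf_greatest) auto
  thus "inner p E / ?h \<le> 1 + R" by simp
qed

lemma lower:
  "\<exists>a. a \<in> Her \<and> a \<noteq> 0 \<and> (\<forall>x\<in>K. 0 \<le> inner a x) \<and> (\<forall>Z\<in>F. (1 + R) * inner a Z \<le> inner a E)"
proof -
  define s where "s = 1 + R"
  have s1: "s \<ge> 1" using R_nonneg by (simp add: s_def)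
  define S where "S = {lam *\<^sub>R Z | lam Z. 0 \<le> lam \<and> lam \<le> 1 \<and> Z \<in> F}"
  define C where "C = (\<Union>x\<in>(\<lambda>x. s *\<^sub>R x) ` S. \<Union>y\<in>K. {x - y})"
  have Cconv: "convex C" unfolding C_def
    by (intro convex_differences convex_scaling Kconv) (use Sconv S_def in simp)
  have Cmem: "(s * t) *\<^sub>R Z - k \<in> C" if "0 \<le> t" "t \<le> 1" "Z \<in> F" "k \<in> K" for t Z k
    unfolding C_def S_def using that by (force simp: image_iff)
  have Cmem': "\<exists>t Z k. 0 \<le> t \<and> t \<le> 1 \<and> Z \<in> F \<and> k \<in> K \<and> x = (s * t) *\<^sub>R Z - k" if "x \<in> C" for x
  proof -
    have "\<exists>y\<in>(\<lambda>x. s *\<^sub>R x) ` S. \<exists>k\<in>K. x = y - k" using that unfolding C_def by simp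
    then obtain y k where yk: "y \<in> (\<lambda>x. s *\<^sub>R x) ` S" "k \<in> K" "x = y - k"
      by blast
    obtain lam Z where lz: "y = s *\<^sub>R (lam *\<^sub>R Z)" "0 \<le> lam" "lam \<le> 1" "Z \<in> F"
      using yk(1) unfolding S_def by blast
    have "x = (s * lam) *\<^sub>R Z - k" using yk(3) lz(1) by simp
    thus ?thesis using lz yk(2) by blast
  qed
  have CHer: "x \<in> Her" if "x \<in> C" for x
    using Cmem'[OF that] FHer KHer by (auto intro!: Her_diff Her_scaleR)
  define D where "D = HP -` C"
  have Dconv: "convex D" unfolding D_def by (rule convex_linear_vimage[OF linear_HP Cconv])
  define T where "T = {E + e *\<^sub>R Z0 | e. e > 0}"
  have Tconv: "convex T" unfolding T_def convex_def
  proof (clarify)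
    fix u v :: real and e1 e2 :: real
    assume "0 \<le> u" "0 \<le> v" "u + v = 1" "0 < e1" "0 < e2"
    moreover have "u *\<^sub>R (E + e1 *\<^sub>R Z0) + v *\<^sub>R (E + e2 *\<^sub>R Z0) = (u + v) *\<^sub>R E + (u * e1 + v * e2) *\<^sub>R Z0"
      by (simp add: algebra_simps)
    moreover have "u * e1 + v * e2 > 0" using calculation
      by (smt (verit) mult_nonneg_nonneg mult_pos_pos)
    ultimately show "\<exists>e. u *\<^sub>R (E + e1 *\<^sub>R Z0) + v *\<^sub>R (E + e2 *\<^sub>R Z0) = E + e *\<^sub>R Z0 \<and> 0 < e"
      by auto
  qed
  have HP0: "HP 0 = 0" using linear_0[OF linear_HP] .
  have zeroC: "0 \<in> C" using Cmem[of 0 Z0 0] Z0F K_zero by simp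
  have D_ne: "D \<noteq> {}" unfolding D_def using zeroC HP0 by auto
  have T_ne: "T \<noteq> {}" unfolding T_def using zero_less_one by blast
  have disj: "D \<inter> T = {}"
  proof (rule ccontr)
    assume "D \<inter> T \<noteq> {}"
    then obtain e where e: "e > 0" "HP (E + e *\<^sub>R Z0) \<in> C" unfolding D_def T_def by auto
    have "E + e *\<^sub>R Z0 \<in> Her" using EHer Z0F FHer by (blast intro: Her_add Her_scaleR)
    hence "HP (E + e *\<^sub>R Z0) = E + e *\<^sub>R Z0" by (rule HP_id)
    hence "E + e *\<^sub>R Z0 \<in> C" using e(2) by simp
    then obtain t Z k where tZk: "0 \<le> t" "t \<le> 1" "Z \<in> F" "k \<in> K" "E + e *\<^sub>R Z0 = (s * t) *\<^sub>R Z - k"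
      using Cmem' by blast
    have rob: "robust (e *\<^sub>R Z0 + k)" by (rule robust_add[OF robust_scale[OF robust_Z0 e(1)] tZk(4)])
    have "E = (s * t) *\<^sub>R Z - (e *\<^sub>R Z0 + k)" using tZk(5) by (simp add: algebra_simps)
    from KL[OF tZk(3) rob this] obtain l where l: "l \<in> Aset" "l < s * t - 1" by blast
    have "s * t \<le> s" using s1 tZk(2) by (simp add: mult_left_le)
    hence "l < R" using l s_def by simp
    with R_le[OF l(1)] show False by simp
  qed
  obtain a b where ab: "a \<noteq> 0" "\<forall>x\<in>D. inner a x \<le> b" "\<forall>x\<in>T. inner a x \<ge> b"
    using separating_hyperplane_sets[OF Dconv Tconv D_ne T_ne disj] by blast
  define w where "w = a - HP a"
  have HPw: "HP w = 0" unfolding w_def linear_diff[OF linear_HP] HP_id[OF HP_Her] by simp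
  have "inner a (tau *\<^sub>R w) \<le> b" for tau
  proof -
    have "HP (tau *\<^sub>R w) = tau *\<^sub>R HP w" by (rule linear_scale[OF linear_HP])
    hence "HP (tau *\<^sub>R w) = 0" using HPw by simp
    hence "tau *\<^sub>R w \<in> D" unfolding D_def using zeroC by simp
    thus ?thesis using ab(2) by blast
  qed
  hence aw: "inner a w = 0"
  proof -
    assume H: "\<And>tau. inner a (tau *\<^sub>R w) \<le> b"
    show ?thesis
    proof (rule ccontr)
      assume nz: "inner a w \<noteq> 0"
      have "inner a (((\<bar>b\<bar> + 1) / inner a w) *\<^sub>R w) = \<bar>b\<bar> + 1" using nz by simp
      with H[of "(\<bar>b\<bar> + 1) / inner a w"] show False by simp
    qed
  qed
  have "inner (HP a) w = 0" using HP_selfadj[of a w] HPw by simp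
  hence "inner w w = 0" using aw unfolding w_def by (simp add: inner_diff_left)
  hence "w = 0" by simp
  hence aH: "a \<in> Her" using HP_Her[of a] unfolding w_def by simp
  have aC: "inner a x \<le> b" if "x \<in> C" for x
  proof -
    have "HP x = x" using HP_id[OF CHer[OF that]] .
    hence "x \<in> D" unfolding D_def using that by simp
    thus ?thesis using ab(2) by blast
  qed
  have aE: "inner a E \<ge> b"
  proof (rule ccontr)
    assume "\<not> inner a E \<ge> b"
    hence lt: "inner a E < b" by simp
    define e where "e = (b - inner a E) / (\<bar>inner a Z0\<bar> + 1)"
    have e0: "e > 0" using lt by (simp add: e_def)
    have "inner a (E + e *\<^sub>R Z0) \<ge> b" using ab(3) e0 unfolding T_def by blast
    hence "inner a E + e * inner a Z0 \<ge> b" by (simp add: inner_add_right)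
    moreover have "e * inner a Z0 \<le> e * \<bar>inner a Z0\<bar>" using e0 by (simp add: mult_left_mono)
    moreover have "e * (\<bar>inner a Z0\<bar> + 1) = b - inner a E" by (simp add: e_def)
    ultimately show False using e0 by (smt (verit) mult_pos_pos distrib_left)
  qed
  have b0: "b \<ge> 0" using aC[OF zeroC] by simp
  have aK: "0 \<le> inner a k" if k: "k \<in> K" for k
  proof (rule ccontr)
    assume "\<not> 0 \<le> inner a k"
    hence neg: "inner a k < 0" by simp
    define tau where "tau = (b + 1) / (- inner a k)"
    have tau0: "tau \<ge> 0" unfolding tau_def using neg b0 by (intro divide_nonneg_pos) simp_all
    have "(s * 0) *\<^sub>R Z0 - tau *\<^sub>R k \<in> C" using Cmem[of 0 Z0 "tau *\<^sub>R k"] Z0F K_scale[OF k tau0] by simp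
    hence "- (tau *\<^sub>R k) \<in> C" by simp
    hence "inner a (- (tau *\<^sub>R k)) \<le> b" by (rule aC)
    moreover have "inner a (- (tau *\<^sub>R k)) = b + 1" using neg by (simp add: tau_def)
    ultimately show False by simp
  qed
  have aF: "s * inner a Z \<le> inner a E" if Z: "Z \<in> F" for Z
  proof -
    have "(s * 1) *\<^sub>R Z - 0 \<in> C" by (rule Cmem[OF _ _ Z K_zero]) simp_all
    hence "s *\<^sub>R Z \<in> C" by simp
    hence "inner a (s *\<^sub>R Z) \<le> b" by (rule aC)
    thus ?thesis using aE by simp
  qed
  show ?thesis using aH ab(1) aK aF unfolding s_def by blast
qed

end



theorem proposition3:
  fixes K F :: "(complex^'n^'n) set"
    and E :: "complex^'n^'n"
    and M :: nat
    and L :: "((nat \<Rightarrow> complex^'n^'n \<Rightarrow> complex^'m^'m) \<times> (nat \<Rightarrow> complex^'m^'m)) set"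
  assumes K: "proper_cone K"
    and F_sub: "F \<subseteq> Her"
    and F_compact: "compact F"
    and F_conv: "convex {lam *\<^sub>R Z | lam Z. 0 \<le> lam \<and> lam \<le> 1 \<and> Z \<in> F}"
    and F_int: "F \<inter> ((top_of_set Her) interior_of K) \<noteq> {}"
    and E: "E \<in> free_set F K"
    and L: "\<forall>(J, Phi)\<in>L. \<forall>m\<in>{1..M}. her_linear (J m) \<and> Phi m \<in> Her"
    and gen: "{lam *\<^sub>R phi | lam phi. lam \<ge> 0 \<and>
                 phi \<in> {(\<Sum>m=1..M. her_adj (J m) (Phi m)) | J Phi. (J, Phi) \<in> L}}
              = dual_cone K"
  defines "L' \<equiv> {(J, Phi) \<in> L. (\<Sum>m=1..M. her_adj (J m) (Phi m)) \<noteq> 0}"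
    and "ratio \<equiv> (\<lambda>(J, Phi). (\<Sum>m=1..M. hs_inner (Phi m) (J m E)) /
                     (SUP Z\<in>F. (\<Sum>m=1..M. hs_inner (Phi m) (J m Z))))"
  shows "(\<exists>p\<in>L'. ratio p = 1 + robustness F K E) \<and> (\<forall>p\<in>L'. ratio p \<le> 1 + robustness F K E)"
proof -
  have KHer: "K \<subseteq> Her" and Kcone: "cone K" and Kconv: "convex K"
    using K unfolding proper_cone_def by auto
  obtain Z0 where Z0F: "Z0 \<in> F" and Z0i: "Z0 \<in> (top_of_set Her) interior_of K"
    using F_int by blast
  then obtain T where T: "openin (top_of_set Her) T" "Z0 \<in> T" "T \<subseteq> K"
    unfolding interior_of_def by blast
  then obtain U where U: "open U" "T = Her \<inter> U" by (auto simp: openin_open)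
  obtain e where e: "e > 0" "ball Z0 e \<subseteq> U"
    using U T(2) open_contains_ball by blast
  have Z0H: "Z0 \<in> Her" using Z0F F_sub by blast
  have Z0ball: "Z0 + y \<in> K" if "y \<in> Her" "norm y < e" for y
  proof -
    have "Z0 + y \<in> Her" using Z0H that Her_add by blast
    moreover have "Z0 + y \<in> ball Z0 e" using that by (simp add: dist_norm)
    ultimately show ?thesis using e U T by blast
  qed
  have EHer: "E \<in> Her" and Nfree: "\<And>d Z. Z \<in> F \<Longrightarrow> d < 1 \<Longrightarrow> d *\<^sub>R Z - E \<notin> K"
    using E unfolding free_set_def by auto
  interpret setting K F E Z0 e
    by unfold_locales (use KHer Kcone Kconv F_sub F_compact F_conv Z0F T U e Z0ball EHer Nfree in auto)
  have RR: "robustness F K E = R" by (rule R_eq)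
  define adjsum where "adjsum J Phi = (\<Sum>m=1..M. her_adj (J m) (Phi m))"
    for J :: "nat \<Rightarrow> complex^'n^'n \<Rightarrow> complex^'m^'m" and Phi :: "nat \<Rightarrow> complex^'m^'m"
  have adjm: "her_adj (J m) (Phi m) \<in> Her \<and> (\<forall>X\<in>Her. hs_inner (her_adj (J m) (Phi m)) X = hs_inner (Phi m) (J m X))"
    if "(J, Phi) \<in> L" "m \<in> {1..M}" for J Phi m
    using L that by (intro her_adj) auto
  have adjH: "adjsum J Phi \<in> Her" if "(J, Phi) \<in> L" for J Phi
    unfolding adjsum_def by (rule Her_sum) (use adjm[OF that] in blast)
  have num: "(\<Sum>m=1..M. hs_inner (Phi m) (J m X)) = inner (adjsum J Phi) X"
    if "(J, Phi) \<in> L" "X \<in> Her" for J Phi X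
  proof -
    have "(\<Sum>m=1..M. hs_inner (Phi m) (J m X)) = (\<Sum>m=1..M. inner (her_adj (J m) (Phi m)) X)"
    proof (rule sum.cong[OF refl])
      fix m assume "m \<in> {1..M}"
      thus "hs_inner (Phi m) (J m X) = inner (her_adj (J m) (Phi m)) X"
        using adjm[OF that(1)] that(2) hs_inner_eq by metis
    qed
    also have "\<dots> = inner (adjsum J Phi) X" by (simp add: adjsum_def inner_sum_left)
    finally show ?thesis .
  qed
  have dualK: "p \<in> dual_cone K \<longleftrightarrow> p \<in> Her \<and> (\<forall>x\<in>K. 0 \<le> inner p x)" for p
  proof -
    have eq: "\<And>x. x \<in> K \<Longrightarrow> hs_inner p x = inner p x" using KHer hs_inner_eq by blast
    show ?thesis unfolding dual_cone_def using eq by auto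
  qed
  have adjdual: "adjsum J Phi \<in> dual_cone K" if "(J, Phi) \<in> L" for J Phi
  proof -
    have "adjsum J Phi \<in> {lam *\<^sub>R phi | lam phi. lam \<ge> 0 \<and>
                 phi \<in> {(\<Sum>m=1..M. her_adj (J m) (Phi m)) | J Phi. (J, Phi) \<in> L}}"
    proof -
      have "\<exists>lam phi. adjsum J Phi = lam *\<^sub>R phi \<and> lam \<ge> 0 \<and>
             phi \<in> {(\<Sum>m=1..M. her_adj (J m) (Phi m)) | J Phi. (J, Phi) \<in> L}"
        by (rule exI[of _ 1], rule exI[of _ "adjsum J Phi"]) (use that in \<open>auto simp: adjsum_def\<close>)
      thus ?thesis by blast
    qed
    thus ?thesis by (simp only: gen)
  qed
  have ratio_eq: "ratio (J, Phi) = inner (adjsum J Phi) E / (SUP Z\<in>F. inner (adjsum J Phi) Z)"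
    if "(J, Phi) \<in> L" for J Phi
  proof -
    have "(SUP Z\<in>F. (\<Sum>m=1..M. hs_inner (Phi m) (J m Z))) = (SUP Z\<in>F. inner (adjsum J Phi) Z)"
      using num[OF that] F_sub by (intro SUP_cong) auto
    thus ?thesis unfolding ratio_def using num[OF that EHer] by simp
  qed
  have part2: "\<forall>p\<in>L'. ratio p \<le> 1 + robustness F K E"
  proof
    fix p assume "p \<in> L'"
    then obtain J Phi where p: "p = (J, Phi)" "(J, Phi) \<in> L" "adjsum J Phi \<noteq> 0"
      unfolding L'_def adjsum_def by auto
    have d: "adjsum J Phi \<in> Her" "\<forall>x\<in>K. 0 \<le> inner (adjsum J Phi) x"
      using adjdual[OF p(2)] dualK by auto
    show "ratio p \<le> 1 + robustness F K E"
      using upper(2)[OF d p(3)] ratio_eq[OF p(2)] p(1) RR by simp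
  qed
  obtain a where a: "a \<in> Her" "a \<noteq> 0" "\<forall>x\<in>K. 0 \<le> inner a x" "\<forall>Z\<in>F. (1 + R) * inner a Z \<le> inner a E"
    using lower by blast
  have "a \<in> dual_cone K" using a dualK by auto
  hence "a \<in> {lam *\<^sub>R phi | lam phi. lam \<ge> 0 \<and>
                 phi \<in> {(\<Sum>m=1..M. her_adj (J m) (Phi m)) | J Phi. (J, Phi) \<in> L}}"
    by (simp only: gen)
  then obtain lam J Phi where lJ: "a = lam *\<^sub>R adjsum J Phi" "lam \<ge> 0" "(J, Phi) \<in> L"
    unfolding adjsum_def by blast
  define phi where "phi = adjsum J Phi"
  have lam0: "lam > 0" and phi0: "phi \<noteq> 0" using lJ a(2) unfolding phi_def by auto
  have d: "phi \<in> Her" "\<forall>x\<in>K. 0 \<le> inner phi x"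
    using adjdual[OF lJ(3)] dualK unfolding phi_def by auto
  have R1: "1 + R > 0" using R_nonneg by simp
  have bound: "inner phi Z \<le> inner phi E / (1 + R)" if Z: "Z \<in> F" for Z
  proof -
    have "lam * ((1 + R) * inner phi Z) \<le> lam * inner phi E"
      using a(4) Z lJ(1) unfolding phi_def by (simp add: algebra_simps)
    hence "(1 + R) * inner phi Z \<le> inner phi E" using lam0 by simp
    thus ?thesis using R1 by (simp add: pos_le_divide_eq mult.commute)
  qed
  have hle: "(SUP Z\<in>F. inner phi Z) \<le> inner phi E / (1 + R)"
    using F_ne bound by (rule cSUP_least)
  have hpos: "(SUP Z\<in>F. inner phi Z) > 0" by (rule upper(1)[OF d phi0])
  have "1 + R \<le> inner phi E / (SUP Z\<in>F. inner phi Z)"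
    using hle R1 hpos by (simp add: pos_le_divide_eq mult.commute)
  moreover have "inner phi E / (SUP Z\<in>F. inner phi Z) \<le> 1 + R" by (rule upper(2)[OF d phi0])
  ultimately have "ratio (J, Phi) = 1 + robustness F K E"
    using ratio_eq[OF lJ(3)] RR unfolding phi_def by simp
  moreover have "(J, Phi) \<in> L'" using lJ(3) phi0 unfolding L'_def phi_def adjsum_def by simp
  ultimately show ?thesis using part2 by blast
qed


end
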